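(* Let $n\in\mathbb{N}$, $\varkappa\in\mathbb{N}^n$, $N=|\varkappa|$. Then $\det M(y,\varkappa)=\det G_\emptyset(y,\varkappa)$.
   Context: $\operatorname{e}_m$ is the elementary symmetric polynomial of degree $m$, zero for $m<0$ or $m$ larger than the number of variables. For a list of nonnegative integers $\mu$, $y^{[\mu]}$ is the list in which $y_1$ is repeated $\mu_1$ times, then $y_2$ repeated $\mu_2$ times, etc.; $b_q$ is the $q$th standard unit vector in $\mathbb{Z}^n$. Each $p\in\{1,\ldots,N\}$ is written uniquely as $p=\varkappa_1+\cdots+\varkappa_{q-1}+r$ with $1\le q\le n$, $1\le r\le\varkappa_q$. $M(y,\varkappa)$ is the $N\times N$ matrix with $M(y,\varkappa)_{k,p}=(-1)^{N-k-r+1}\operatorname{e}_{N-k-r+1}(y^{[\varkappa-rb_q]})$. $G_\emptyset(y,\varkappa)$ is the $N\times N$ confluent Vandermonde matrix with $(j,p)$ entry $\binom{N-j}{r-1}y_q^{N-j-r+1}$ if $N-j-r+1\ge0$ and $0$ otherwise. *)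

theory Defs
  imports "Jordan_Normal_Form.Determinant"
begin

definition esym :: "int \<Rightarrow> 'a::comm_ring_1 list \<Rightarrow> 'a" where
  "esym m xs = (if m < 0 then 0 else
     (\<Sum>S\<in>{S. S \<subseteq> {0..<length xs} \<and> card S = nat m}. \<Prod>i\<in>S. xs ! i))"

text \<open>y^[mu]: y_1 repeated mu_1 times, then y_2 repeated mu_2 times, etc.
  (indices 0-based: the variable y_{q+1} of the paper is y q).\<close>
definition rep_list :: "(nat \<Rightarrow> 'a) \<Rightarrow> nat list \<Rightarrow> 'a list" where
  "rep_list y mu = concat (map (\<lambda>q. replicate (mu ! q) (y q)) [0..<length mu])"

text \<open>Decomposition p = kappa_1 + ... + kappa_(q-1) + r with 1 <= r <= kappa_q.
  Returned q is 0-based (paper's q minus 1), r as in the paper.\<close>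
definition decomp :: "nat list \<Rightarrow> nat \<Rightarrow> nat \<times> nat" where
  "decomp kappa p = (THE (q, r). q < length kappa \<and> 1 \<le> r \<and> r \<le> kappa ! q \<and>
                        p = sum_list (take q kappa) + r)"

text \<open>M(y,kappa), entries (k,p) with k,p in 1..N stored at 0-based position (k-1,p-1).\<close>
definition M_mat :: "(nat \<Rightarrow> 'a::comm_ring_1) \<Rightarrow> nat list \<Rightarrow> 'a mat" where
  "M_mat y kappa = (let N = sum_list kappa in
     mat N N (\<lambda>(i, j). let k = i + 1; p = j + 1; (q, r) = decomp kappa p;
                          m = int N - int k - int r + 1 in
        (-1) ^ nat m * esym m (rep_list y (kappa[q := kappa ! q - r]))))"

definition G_mat :: "(nat \<Rightarrow> 'a::comm_ring_1) \<Rightarrow> nat list \<Rightarrow> 'a mat" where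
  "G_mat y kappa = (let N = sum_list kappa in
     mat N N (\<lambda>(i, j'). let j = i + 1; p = j' + 1; (q, r) = decomp kappa p;
                          m = int N - int j - int r + 1 in
        (if m \<ge> 0 then of_nat ((N - j) choose (r - 1)) * y q ^ nat m else 0)))"

end

theory Submission imports Defs "HOL-Computational_Algebra.Formal_Power_Series" begin

definition lfac :: "'a::comm_ring_1 \<Rightarrow> 'a fps" where
  "lfac c = 1 - fps_const c * fps_X"

lemma lfac_alt: "lfac c = fps_const (- c) * fps_X + 1"
  unfolding lfac_def by (simp del: fps_const_neg add: fps_const_neg[symmetric])

lemma esym_fps:
  fixes xs :: "'a::comm_ring_1 list"
  shows "fps_nth (\<Prod>i\<in>{0..<length xs}. lfac (xs!i)) m = (-1)^m * esym (int m) xs"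
proof -
  let ?A = "{0..<length xs}"
  have "(\<Prod>i\<in>?A. lfac (xs!i)) = (\<Prod>i\<in>?A. fps_const (- xs!i) * fps_X + 1)"
    by (simp add: lfac_alt)
  also have "\<dots> = (\<Sum>B\<in>Pow ?A. (\<Prod>i\<in>B. fps_const (- xs!i) * fps_X) * (\<Prod>i\<in>?A-B. 1))"
    by (rule prod_add) simp
  also have "\<dots> = (\<Sum>B\<in>Pow ?A. fps_const (\<Prod>i\<in>B. - xs!i) * fps_X ^ card B)"
  proof (rule sum.cong[OF refl])
    fix B assume "B \<in> Pow ?A"
    then have "finite B" by (meson PowD finite_atLeastLessThan finite_subset)
    then show "(\<Prod>i\<in>B. fps_const (- xs!i) * fps_X) * (\<Prod>i\<in>?A-B. 1) = fps_const (\<Prod>i\<in>B. - xs!i) * fps_X ^ card B"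
      by (induction B rule: finite_induct) (auto simp: algebra_simps)
  qed
  finally have eq: "(\<Prod>i\<in>?A. lfac (xs!i)) = \<dots>" .
  have "fps_nth (\<Prod>i\<in>?A. lfac (xs!i)) m = (\<Sum>B\<in>Pow ?A. if card B = m then (\<Prod>i\<in>B. - xs!i) else 0)"
    unfolding eq fps_sum_nth by (auto simp: fps_mult_left_const_nth intro!: sum.cong)
  also have "\<dots> = (\<Sum>B\<in>{B. B \<subseteq> ?A \<and> card B = m}. (\<Prod>i\<in>B. - xs!i))"
    by (subst sum.inter_filter[symmetric]) (auto intro!: sum.cong)
  also have "\<dots> = (\<Sum>B\<in>{B. B \<subseteq> ?A \<and> card B = m}. (-1)^m * (\<Prod>i\<in>B. xs!i))"
    by (rule sum.cong[OF refl]) (simp add: prod_uminus)  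
  also have "\<dots> = (-1)^m * esym (int m) xs"
    by (simp add: esym_def sum_distrib_left)
  finally show ?thesis .
qed

definition gser :: "'a::comm_ring_1 \<Rightarrow> nat \<Rightarrow> 'a fps" where
  "gser a r = Abs_fps (\<lambda>n. of_nat ((n + r - 1) choose n) * a ^ n)"

lemma gser_0: "gser a 0 = 1"
  by (rule fps_ext) (auto simp: gser_def binomial_eq_0)

lemma gser_Suc: "gser a (Suc r) * lfac a = gser a r"
proof (rule fps_ext)
  fix n
  have e: "gser a (Suc r) * lfac a = gser a (Suc r) - fps_const a * (fps_X * gser a (Suc r))"
    by (simp add: lfac_def algebra_simps)
  show "fps_nth (gser a (Suc r) * lfac a) n = fps_nth (gser a r) n"
  proof (cases n)
    case 0 then show ?thesis by (simp add: e gser_def lfac_def)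
  next
    case (Suc k)
    have "((Suc k + r) choose Suc k) = ((k + r) choose Suc k) + ((k + r) choose k)"
      by simp
    then have h: "of_nat ((Suc k + r) choose Suc k) * a ^ Suc k - a * (of_nat ((k + r) choose k) * a ^ k)
       = of_nat ((Suc k + r - 1) choose Suc k) * (a ^ Suc k :: 'a)"
      by (simp add: algebra_simps)
    show ?thesis unfolding e using h by (simp add: gser_def Suc fps_X_mult_nth)
  qed
qed

lemma gser_inv: "gser a r * lfac a ^ r = 1"
proof (induction r)
  case 0 then show ?case by (simp add: gser_0)
next
  case (Suc r)
  have "gser a (Suc r) * lfac a ^ Suc r = (gser a (Suc r) * lfac a) * lfac a ^ r"
    by (simp add: algebra_simps)
  then show ?case using Suc by (simp add: gser_Suc)
qed

lemma prod_list_map_concat: "prod_list (map g (concat xss)) = prod_list (map (\<lambda>xs. prod_list (map g xs)) xss)"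
  by (induction xss) auto

lemma prod_list_map_upt: "prod_list (map h [0..<n]) = (\<Prod>q<n. h q)"
  by (induction n) (auto simp: lessThan_Suc mult.commute)

lemma prod_rep:
  "(\<Prod>i\<in>{0..<length (rep_list y kappa)}. lfac (rep_list y kappa ! i)) = (\<Prod>q<length kappa. lfac (y q) ^ (kappa ! q))"
proof -
  have "(\<Prod>i\<in>{0..<length (rep_list y kappa)}. lfac (rep_list y kappa ! i)) = prod_list (map lfac (rep_list y kappa))"
    by (simp add: prod.list_conv_set_nth)
  also have "\<dots> = (\<Prod>q<length kappa. lfac (y q) ^ (kappa ! q))"
    unfolding rep_list_def prod_list_map_concat by (simp add: o_def prod_list_map_upt)
  finally show ?thesis .
qed

lemma prod_split:
  assumes "q0 < length kappa" "r \<le> kappa ! q0"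
  shows "(\<Prod>q<length kappa. lfac (y q) ^ (kappa[q0 := kappa ! q0 - r] ! q)) * lfac (y q0) ^ r
       = (\<Prod>q<length kappa. lfac (y q) ^ (kappa ! q))"
proof -
  let ?k = "kappa[q0 := kappa ! q0 - r]"
  have A: "q0 \<in> {..<length kappa}" using assms by auto
  have "(\<Prod>q<length kappa. lfac (y q) ^ (?k ! q)) = lfac (y q0) ^ (kappa ! q0 - r) * (\<Prod>q\<in>{..<length kappa} - {q0}. lfac (y q) ^ (?k ! q))"
    using prod.remove[OF _ A, of "\<lambda>q. lfac (y q) ^ (?k ! q)"] assms by simp
  also have "(\<Prod>q\<in>{..<length kappa} - {q0}. lfac (y q) ^ (?k ! q)) = (\<Prod>q\<in>{..<length kappa} - {q0}. lfac (y q) ^ (kappa ! q))"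
    by (rule prod.cong) auto
  finally have "(\<Prod>q<length kappa. lfac (y q) ^ (?k ! q)) * lfac (y q0) ^ r = lfac (y q0) ^ (kappa ! q0 - r + r) * (\<Prod>q\<in>{..<length kappa} - {q0}. lfac (y q) ^ (kappa ! q))"
    by (simp add: power_add algebra_simps)
  also have "\<dots> = (\<Prod>q<length kappa. lfac (y q) ^ (kappa ! q))"
    using prod.remove[OF _ A, of "\<lambda>q. lfac (y q) ^ (kappa ! q)"] assms by simp
  finally show ?thesis .
qed

lemma key:
  assumes "q0 < length kappa" "r \<le> kappa ! q0"
  shows "(-1)^K * esym (int K) (rep_list y (kappa[q0 := kappa ! q0 - r]))
    = (\<Sum>s=0..K. fps_nth (\<Prod>q<length kappa. lfac (y q) ^ (kappa ! q)) s * (of_nat ((K - s + r - 1) choose (K - s)) * y q0 ^ (K - s)))"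
proof -
  let ?k = "kappa[q0 := kappa ! q0 - r]"
  let ?Q = "\<Prod>q<length kappa. lfac (y q) ^ (?k ! q)"
  let ?F = "\<Prod>q<length kappa. lfac (y q) ^ (kappa ! q)"
  have "(-1)^K * esym (int K) (rep_list y ?k) = fps_nth ?Q K"
    using esym_fps[of "rep_list y ?k" K] prod_rep[of y ?k] by simp
  also have "?Q = ?Q * (lfac (y q0) ^ r * gser (y q0) r)"
    using gser_inv[of "y q0" r] by (simp add: mult.commute)
  also have "\<dots> = ?F * gser (y q0) r"
    using prod_split[OF assms, of y] by (simp add: mult.assoc[symmetric])
  finally show ?thesis by (simp add: fps_mult_nth gser_def)
qed

lemma decomp_ex:
  fixes kappa :: "nat list"
  assumes "1 \<le> p" "p \<le> sum_list kappa"
  shows "\<exists>q r. q < length kappa \<and> 1 \<le> r \<and> r \<le> kappa ! q \<and> p = sum_list (take q kappa) + r"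
  using assms
proof (induction kappa arbitrary: p)
  case Nil then show ?case by simp
next
  case (Cons a ks)
  show ?case
  proof (cases "p \<le> a")
    case True
    then show ?thesis using Cons.prems by (intro exI[of _ 0] exI[of _ p]) auto
  next
    case False
    have "1 \<le> p - a" "p - a \<le> sum_list ks" using False Cons.prems by auto
    then obtain q r where "q < length ks" "1 \<le> r" "r \<le> ks ! q" "p - a = sum_list (take q ks) + r"
      using Cons.IH[of "p - a"] by blast
    then show ?thesis using False by (intro exI[of _ "Suc q"] exI[of _ r]) auto
  qed
qed

lemma take_mono_sum:
  assumes "q1 < q2" "q2 \<le> length kappa"
  shows "sum_list (take q1 kappa) + kappa ! q1 \<le> sum_list (take q2 (kappa :: nat list))"
proof -
  have "sum_list (take (Suc q1) kappa) = sum_list (take q1 kappa) + kappa ! q1"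
    using assms by (simp add: take_Suc_conv_app_nth)
  moreover have "take q2 kappa = take (Suc q1) kappa @ take (q2 - Suc q1) (drop (Suc q1) kappa)"
    using assms take_add[of "Suc q1" "q2 - Suc q1" kappa] by simp
  ultimately show ?thesis by simp
qed

lemma decomp_props:
  assumes "1 \<le> p" "p \<le> sum_list kappa" "decomp kappa p = (q, r)"
  shows "q < length kappa \<and> 1 \<le> r \<and> r \<le> kappa ! q \<and> p = sum_list (take q kappa) + r"
proof -
  let ?P = "\<lambda>(q, r). q < length kappa \<and> 1 \<le> r \<and> r \<le> kappa ! q \<and> p = sum_list (take q kappa) + r"
  have ex: "\<exists>x. ?P x" using decomp_ex[OF assms(1,2)] by auto
  have un: "x = z" if "?P x" "?P z" for x z
  proof -
    obtain q1 r1 where x: "x = (q1, r1)" by force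
    obtain q2 r2 where z: "z = (q2, r2)" by force
    have *: False if "a < b" "a < length kappa" "b < length kappa" "1 \<le> v" "u \<le> kappa ! a"
       "sum_list (take a kappa) + u = sum_list (take b kappa) + v" for a b u v
      using take_mono_sum[of a b kappa] that by auto
    have h1: "q1 < length kappa" "1 \<le> r1" "r1 \<le> kappa ! q1" "p = sum_list (take q1 kappa) + r1"
      using that(1) x by auto
    have h2: "q2 < length kappa" "1 \<le> r2" "r2 \<le> kappa ! q2" "p = sum_list (take q2 kappa) + r2"
      using that(2) z by auto
    have "\<not> q1 < q2"
    proof
      assume "q1 < q2"
      then show False by (rule *[where a=q1 and b=q2 and u=r1 and v=r2]) (use h1 h2 in linarith)+
    qed
    moreover have "\<not> q2 < q1"
    proof
      assume "q2 < q1"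
      then show False by (rule *[where a=q2 and b=q1 and u=r2 and v=r1]) (use h1 h2 in linarith)+
    qed
    ultimately have "q1 = q2" by linarith
    then show ?thesis using that x z by auto
  qed
  have "\<exists>!x. ?P x" using ex un by blast
  then have "?P (The ?P)" by (rule theI')
  moreover have "decomp kappa p = The ?P" unfolding decomp_def by simp
  ultimately have "?P (q, r)" using assms(3) by simp
  then show ?thesis by simp
qed

lemma F0: "fps_nth (\<Prod>q<length kappa. lfac (y q) ^ (kappa ! q)) 0 = 1"
proof -
  have e: "{S. S \<subseteq> {0..<n} \<and> card S = 0} = {{}}" for n :: nat
    by (auto dest: finite_subset[OF _ finite_atLeastLessThan])
  show ?thesis using esym_fps[of "rep_list y kappa" 0] prod_rep[of y kappa]
    by (simp add: esym_def e)
qed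

lemma entry:
  fixes y :: "nat \<Rightarrow> 'a::comm_ring_1"
  assumes "q < length kappa" "1 \<le> r" "r \<le> kappa ! q"
  shows "(-1) ^ nat (int N - int (i+1) - int r + 1) * esym (int N - int (i+1) - int r + 1) (rep_list y (kappa[q := kappa ! q - r]))
    = (\<Sum>l\<in>{0..<N}. (if i \<le> l then fps_nth (\<Prod>q<length kappa. lfac (y q) ^ (kappa ! q)) (l - i) else 0) *
        (if int N - int (l+1) - int r + 1 \<ge> 0 then of_nat ((N - (l+1)) choose (r - 1)) * y q ^ nat (int N - int (l+1) - int r + 1) else 0))"
    (is "?L = (\<Sum>l\<in>{0..<N}. ?T l)")
proof (cases "N < i + r")
  case True
  have "?L = 0" using True by (simp add: esym_def)
  moreover have "?T l = 0" for l using True by auto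
  ultimately show ?thesis by simp
next
  case False
  define K where "K = N - i - r"
  have iK: "int N - int (i+1) - int r + 1 = int K" using False by (simp add: K_def)
  have "?L = (-1)^K * esym (int K) (rep_list y (kappa[q := kappa ! q - r]))"
    by (simp only: iK nat_int)
  also have "\<dots> = (\<Sum>s=0..K. fps_nth (\<Prod>q<length kappa. lfac (y q) ^ (kappa ! q)) s * (of_nat ((K - s + r - 1) choose (K - s)) * y q ^ (K - s)))"
    by (rule key[OF assms(1,3)])
  also have "\<dots> = (\<Sum>s\<in>{0..K}. ?T (i + s))"
  proof (rule sum.cong[OF refl])
    fix s assume "s \<in> {0..K}"
    then have sK: "s \<le> K" by simp
    have e1: "int N - int (i + s + 1) - int r + 1 = int (K - s)" using sK False assms(2) by (simp add: K_def)
    have e2: "N - (i + s + 1) = K - s + r - 1" using sK False assms(2) by (simp add: K_def)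
    have e3: "(K - s + r - 1) choose (r - 1) = (K - s + r - 1) choose (K - s)"
      using assms(2) binomial_symmetric[of "r - 1" "K - s + r - 1"] by simp
    show "fps_nth (\<Prod>q<length kappa. lfac (y q) ^ (kappa ! q)) s * (of_nat ((K - s + r - 1) choose (K - s)) * y q ^ (K - s)) = ?T (i + s)"
      by (simp only: e1 e2 e3 nat_int) simp
  qed
  also have "\<dots> = (\<Sum>l\<in>(\<lambda>s. i + s) ` {0..K}. ?T l)"
    by (simp only: sum.reindex[OF inj_on_add] o_def)
  also have "\<dots> = (\<Sum>l\<in>{0..<N}. ?T l)"
  proof (rule sum.mono_neutral_left)
    show "(\<lambda>s. i + s) ` {0..K} \<subseteq> {0..<N}" using False assms(2) by (auto simp: K_def)
    show "\<forall>l\<in>{0..<N} - (\<lambda>s. i + s) ` {0..K}. ?T l = 0"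
    proof
      fix l assume l: "l \<in> {0..<N} - (\<lambda>s. i + s) ` {0..K}"
      show "?T l = 0"
      proof (cases "i \<le> l")
        case True
        then have "l = i + (l - i)" by simp
        then have "\<not> l - i \<le> K" using l by (metis atLeastAtMost_iff DiffD2 image_eqI le0)
        then show ?thesis using True by (auto simp: K_def)
      qed simp
    qed
  qed simp
  finally show ?thesis .
qed

theorem mainTheorem4:
  fixes y :: "nat \<Rightarrow> 'a::comm_ring_1" and kappa :: "nat list" and n :: nat
  assumes "length kappa = n"
  shows "det (M_mat y kappa) = det (G_mat y kappa)"
proof -
  define N where "N = sum_list kappa"
  define F where "F = (\<Prod>q<length kappa. lfac (y q) ^ (kappa ! q))"
  define U where "U = mat N N (\<lambda>(i,l). if i \<le> l then fps_nth F (l - i) else (0::'a))"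
  have UC: "U \<in> carrier_mat N N" by (simp add: U_def)
  have GC: "G_mat y kappa \<in> carrier_mat N N" by (simp add: G_mat_def N_def Let_def)
  have "upper_triangular U" by (rule upper_triangularI) (simp add: U_def)
  then have "det U = prod_list (diag_mat U)" using det_upper_triangular UC by blast
  also have "\<dots> = 1" unfolding prod_list_diag_prod by (simp add: U_def F_def F0)
  finally have dU: "det U = 1" .
  have MUG: "M_mat y kappa = U * G_mat y kappa"
  proof (rule eq_matI)
    show "dim_row (M_mat y kappa) = dim_row (U * G_mat y kappa)" using UC by (simp add: M_mat_def N_def Let_def)
    show "dim_col (M_mat y kappa) = dim_col (U * G_mat y kappa)" using GC by (simp add: M_mat_def N_def Let_def)
    fix i j assume i: "i < dim_row (U * G_mat y kappa)" and j: "j < dim_col (U * G_mat y kappa)"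
    then have iN: "i < N" and jN: "j < N" using UC GC by auto
    obtain q r where d: "decomp kappa (j+1) = (q, r)" by (cases "decomp kappa (j+1)")
    have pr: "q < length kappa" "1 \<le> r" "r \<le> kappa ! q"
      using decomp_props[OF _ _ d] jN by (auto simp: N_def)
    have "M_mat y kappa $$ (i, j) = (-1) ^ nat (int N - int (i+1) - int r + 1) * esym (int N - int (i+1) - int r + 1) (rep_list y (kappa[q := kappa ! q - r]))"
      using iN jN d by (simp add: M_mat_def N_def[symmetric] Let_def)
    also have "\<dots> = (\<Sum>l\<in>{0..<N}. U $$ (i, l) * G_mat y kappa $$ (l, j))"
      unfolding entry[OF pr] using iN jN d
      by (intro sum.cong refl) (simp add: U_def F_def G_mat_def N_def[symmetric] Let_def)
    also have "\<dots> = (U * G_mat y kappa) $$ (i, j)"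
      using iN jN UC GC by (simp add: index_mult_mat scalar_prod_def)
    finally show "M_mat y kappa $$ (i, j) = (U * G_mat y kappa) $$ (i, j)" .
  qed
  show ?thesis unfolding MUG using det_mult[OF UC GC] dU by simp
qed

end
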